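(* Let $(X_n,\|\cdot\|_n)_{n\ge1}$ be a sequence of Banach spaces, let $(X,\|\cdot\|)$ be the space defined in the context, and let $x=(x_1,x_2,\dots)$ be a nonzero vector of $X$. Then there exist $k\ge2$ and a sequence $(d_n)_{n\ge1}\subseteq(0,1]$ such that $d_n=1-\frac1{n+1}$ for all $n\ge k$ and $$\|x\|=\sum_{n=1}^\infty d_n\|x_n\|_n.$$
   Context: $c_{00}((X_n))$ is the vector space of sequences $(x_1,x_2,\dots)$ with $x_k\in X_k$ and only finitely many $x_k\ne0$; $(x_1,\dots,x_n)$ denotes $(x_1,\dots,x_n,0,0,\dots)$. On $c_{00}((X_n))$ define inductively $\|(x_1)\|=\|x_1\|_1$ (the norm of $X_1$) and, for $n\ge2$, $$\|(x_1,\dots,x_n)\|=\Big(1-\tfrac{1}{n+1}\Big)\big(\|x_n\|_n+\|(x_1,\dots,x_{n-1})\|\big)+\tfrac{1}{n+1}\max\Big\{\tfrac{\|x_n\|_n}{n},\ \|(x_1,\dots,x_{n-1})\|\Big\}.$$ $X$ is the completion of $(c_{00}((X_n)),\|\cdot\|)$, identified with the space of sequences $x=(x_n)$, $x_n\in X_n$, with $\sum_n\|x_n\|_n<\infty$, where $\|x\|=\lim_k\|(x_1,\dots,x_k)\|$. *)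

theory Defs
  imports "HOL-Analysis.Analysis"
begin

text \<open>A Banach space is modelled as a linear subspace V of an ambient real vector
space together with a norm N on V that is complete.  Any sequence of real
Banach spaces can be realised simultaneously in this way (e.g. inside their
product), so this is no loss of generality.\<close>

definition banach_on :: "'a::real_vector set \<Rightarrow> ('a \<Rightarrow> real) \<Rightarrow> bool" where
  "banach_on V N \<longleftrightarrow>
     subspace V \<and>
     (\<forall>v\<in>V. 0 \<le> N v) \<and>
     (\<forall>v\<in>V. N v = 0 \<longleftrightarrow> v = 0) \<and>
     (\<forall>v\<in>V. \<forall>c. N (c *\<^sub>R v) = \<bar>c\<bar> * N v) \<and>
     (\<forall>v\<in>V. \<forall>w\<in>V. N (v + w) \<le> N v + N w) \<and>
     (\<forall>s. (\<forall>k. s k \<in> V) \<longrightarrow>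
          (\<forall>e>0. \<exists>M. \<forall>m\<ge>M. \<forall>n\<ge>M. N (s m - s n) < e) \<longrightarrow>
          (\<exists>v\<in>V. (\<lambda>k. N (s k - v)) \<longlonglongrightarrow> 0))"

text \<open>Spaces and vectors are indexed from 1; index 0 is ignored.
  fnorm N x n is the norm of (x_1,...,x_n,0,0,...) in c00((X_n)).\<close>

fun fnorm :: "(nat \<Rightarrow> 'a \<Rightarrow> real) \<Rightarrow> (nat \<Rightarrow> 'a) \<Rightarrow> nat \<Rightarrow> real" where
  "fnorm N x 0 = 0"
| "fnorm N x (Suc 0) = N 1 (x 1)"
| "fnorm N x (Suc (Suc m)) =
     (1 - 1 / real (m + 3)) * (N (m + 2) (x (m + 2)) + fnorm N x (Suc m))
     + 1 / real (m + 3) * max (N (m + 2) (x (m + 2)) / real (m + 2)) (fnorm N x (Suc m))"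

text \<open>Norm of x in the completion X: the limit of the norms of its truncations.\<close>

definition Xnorm :: "(nat \<Rightarrow> 'a \<Rightarrow> real) \<Rightarrow> (nat \<Rightarrow> 'a) \<Rightarrow> real" where
  "Xnorm N x = lim (\<lambda>k. fnorm N x k)"

end

theory Submission imports Defs begin

lemma rep: "\<exists>c. (\<forall>j\<ge>1. 0 < c j \<and> c j \<le> 1) \<and> fnorm N x n = (\<Sum>j=1..n. c j * N j (x j))"
proof (induction N x n rule: fnorm.induct)
  case (1 N x) then show ?case by (intro exI[of _ "\<lambda>_. 1"]) simp
next
  case (2 N x) then show ?case by (intro exI[of _ "\<lambda>_. 1"]) simp
next
  case (3 N x m)
  then obtain c where c: "\<forall>j\<ge>1. 0 < c j \<and> c j \<le> 1" and F: "fnorm N x (Suc m) = (\<Sum>j=1..Suc m. c j * N j (x j))" by blast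
  define A where "A = N (m+2) (x (m+2))"
  define f where "f = fnorm N x (Suc m)"
  have eq: "fnorm N x (Suc (Suc m)) = (1 - 1 / real (m + 3)) * (A + f) + 1 / real (m + 3) * max (A / real (m + 2)) f"
    by (simp add: A_def f_def)
  have split: "\<And>g. (\<Sum>j=1..Suc (Suc m). g j) = (\<Sum>j=1..Suc m. g j) + g (m+2)"
    by simp
  show ?case
  proof (cases "A / real (m+2) \<le> f")
    case True
    define c' where "c' = c(m+2 := 1 - 1 / real (m+3))"
    have "(\<Sum>j=1..Suc m. c' j * N j (x j)) = (\<Sum>j=1..Suc m. c j * N j (x j))"
      by (rule sum.cong) (auto simp: c'_def)
    then have "fnorm N x (Suc (Suc m)) = (\<Sum>j=1..Suc (Suc m). c' j * N j (x j))"
      unfolding split eq using True F f_def by (simp add: c'_def A_def algebra_simps max_def)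
    moreover have "\<forall>j\<ge>1. 0 < c' j \<and> c' j \<le> 1" using c by (auto simp: c'_def field_simps)
    ultimately show ?thesis by blast
  next
    case False
    define c' where "c' = (\<lambda>j. if j = m+2 then (1 - 1 / real (m+3)) + 1 / (real (m+3) * real (m+2)) else (1 - 1 / real (m+3)) * c j)"
    have "(\<Sum>j=1..Suc m. c' j * N j (x j)) = (1 - 1 / real (m+3)) * (\<Sum>j=1..Suc m. c j * N j (x j))"
      unfolding sum_distrib_left by (rule sum.cong) (auto simp: c'_def)
    then have "fnorm N x (Suc (Suc m)) = (\<Sum>j=1..Suc (Suc m). c' j * N j (x j))"
      unfolding split eq using False F f_def by (simp add: c'_def A_def algebra_simps max_def)
    moreover have "\<forall>j\<ge>1. 0 < c' j \<and> c' j \<le> 1"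
    proof (intro allI impI)
      fix j :: nat assume "j \<ge> 1"
      have h: "1 / (real (m+3) * real (m+2)) \<le> 1 / real (m+3)"
        by (simp add: divide_simps)
      have h2: "0 < 1 - 1 / real (m+3)" "1 - 1 / real (m+3) \<le> 1" by (simp_all add: divide_simps)
      have h3: "0 < 1 / (real (m+3) * real (m+2))" by simp
      show "0 < c' j \<and> c' j \<le> 1"
      proof (cases "j = m+2")
        case True then show ?thesis using h h2 h3 by (simp only: c'_def if_True refl) linarith
      next
        case False
        have cj: "0 < c j" "c j \<le> 1" using c \<open>j \<ge> 1\<close> by auto
        have "(1 - 1 / real (m+3)) * c j \<le> 1" using mult_le_one[OF h2(2) _ cj(2)] h2 cj by simp
        moreover have "0 < (1 - 1 / real (m+3)) * c j" using h2 cj by simp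
        ultimately show ?thesis using False by (simp only: c'_def if_False)
      qed
    qed
    ultimately show ?thesis by blast
  qed
qed

lemma banach_nonneg: "banach_on V N \<Longrightarrow> v \<in> V \<Longrightarrow> 0 \<le> N v"
  unfolding banach_on_def by simp
lemma banach_zero: "banach_on V N \<Longrightarrow> v \<in> V \<Longrightarrow> N v = 0 \<longleftrightarrow> v = 0"
  unfolding banach_on_def by simp

lemma real_step:
  fixes f A t r :: real
  assumes "0 \<le> f" "0 \<le> A" "0 \<le> t" "t \<le> 1"
  shows "f \<le> (1 - t) * (A + f) + t * max (A / r) f"
    and "(1 - t) * A \<le> (1 - t) * (A + f) + t * max (A / r) f"
proof -
  have "t * f \<le> t * max (A / r) f" using assms by (intro mult_left_mono) auto
  moreover have "0 \<le> (1 - t) * A" "0 \<le> (1 - t) * f" "0 \<le> t * f" using assms by auto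
  moreover have "(1 - t) * (A + f) + t * max (A / r) f = (1 - t) * A + (1 - t) * f + t * max (A / r) f"
    by (simp add: algebra_simps)
  moreover have "(1 - t) * f + t * f = f" by (simp add: algebra_simps)
  ultimately show "f \<le> (1 - t) * (A + f) + t * max (A / r) f"
    and "(1 - t) * A \<le> (1 - t) * (A + f) + t * max (A / r) f"
    by linarith+
qed

lemma shift_sum: "(\<Sum>i<(n::nat). g (i+1)) = (\<Sum>j=1..n. (g j :: real))"
  by (induction n) (simp_all add: atLeastAtMostSuc_conv)

theorem corollary1p6:
  fixes V :: "nat \<Rightarrow> 'a::real_vector set"
    and N :: "nat \<Rightarrow> 'a \<Rightarrow> real"
    and x :: "nat \<Rightarrow> 'a"
  assumes banach: "\<And>n. n \<ge> 1 \<Longrightarrow> banach_on (V n) (N n)"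
    and mem: "\<And>n. n \<ge> 1 \<Longrightarrow> x n \<in> V n"
    and summ: "summable (\<lambda>n. N (n + 1) (x (n + 1)))"
    and nonzero: "\<exists>n\<ge>1. x n \<noteq> 0"
  shows "\<exists>k\<ge>2. \<exists>d :: nat \<Rightarrow> real.
           (\<forall>n\<ge>1. 0 < d n \<and> d n \<le> 1) \<and>
           (\<forall>n\<ge>k. d n = 1 - 1 / real (n + 1)) \<and>
           (\<lambda>n. d (n + 1) * N (n + 1) (x (n + 1))) sums Xnorm N x"
proof -
  define a where "a j = N j (x j)" for j
  have anon: "0 \<le> a j" if "j \<ge> 1" for j
    using banach_nonneg[OF banach[OF that] mem[OF that]] unfolding a_def .
  have tpos: "0 \<le> 1 / real (m + 3)" "1 / real (m + 3) \<le> 1" for m by (simp_all add: divide_simps)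
  have fm: "0 \<le> fnorm N x n \<and> fnorm N x n \<le> fnorm N x (Suc n)" for n
  proof (induction n)
    case 0 then show ?case using anon[of 1] by (simp add: a_def)
  next
    case (Suc n)
    then have f0: "0 \<le> fnorm N x (Suc n)" by linarith
    have "fnorm N x (Suc n) \<le> fnorm N x (Suc (Suc n))"
      using real_step(1)[OF f0 anon[of "n+2"] tpos[of n]] by (simp add: a_def)
    then show ?case using f0 by simp
  qed
  have inc: "incseq (fnorm N x)" using fm by (simp add: incseq_SucI)
  obtain m0 where m0: "m0 \<ge> 1" "x m0 \<noteq> 0" using nonzero by blast
  have am0: "0 < a m0"
  proof -
    have "N m0 (x m0) \<noteq> 0" using banach_zero[OF banach[OF m0(1)] mem[OF m0(1)]] m0(2) by simp
    then show ?thesis using anon[OF m0(1)] by (simp add: a_def)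
  qed
  define \<delta> where "\<delta> = fnorm N x m0"
  have dpos: "0 < \<delta>"
  proof (cases m0)
    case 0 then show ?thesis using m0 by simp
  next
    case (Suc m)
    show ?thesis
    proof (cases m)
      case 0 then show ?thesis using am0 Suc by (simp add: \<delta>_def a_def)
    next
      case (Suc m')
      have f0: "0 \<le> fnorm N x (Suc m')" using fm by blast
      have "(1 - 1 / real (m' + 3)) * a m0 \<le> fnorm N x m0"
        using real_step(2)[OF f0 anon[of "m'+2"] tpos[of m']] Suc \<open>m0 = Suc m\<close> by (simp add: a_def)
      moreover have "0 < (1 - 1 / real (m' + 3)) * a m0" using am0 by (simp add: divide_simps)
      ultimately show ?thesis by (simp add: \<delta>_def)
    qed
  qed
  have "(\<lambda>n. a (n+1)) \<longlonglongrightarrow> 0" using summable_LIMSEQ_zero[OF summ] by (simp add: a_def)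
  then have "eventually (\<lambda>n. a (n+1) < \<delta>) sequentially" using dpos by (simp add: order_tendstoD(2))
  then obtain M where M: "\<And>n. n \<ge> M \<Longrightarrow> a (n+1) < \<delta>" by (auto simp: eventually_sequentially)
  define P where "P = M + m0 + 1"
  have cond: "a (m+2) / real (m+2) \<le> fnorm N x (Suc m)" if "Suc m \<ge> P" for m
  proof -
    have A0: "0 \<le> a (m+2)" using anon by simp
    have "a (m+2) / real (m+2) \<le> a (m+2)" using A0 by (simp add: divide_simps mult_le_cancel_left1)
    also have "\<dots> < \<delta>" using M[of "m+1"] that by (simp add: P_def)
    also have "\<delta> \<le> fnorm N x (Suc m)" unfolding \<delta>_def using inc that by (simp add: P_def incseq_def)
    finally show ?thesis by simp
  qed
  have tail: "fnorm N x n = fnorm N x P + (\<Sum>j=Suc P..n. (1 - 1 / real (j+1)) * a j)" if "n \<ge> P" for n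
    using that
  proof (induction n rule: dec_induct)
    case base then show ?case by simp
  next
    case (step n)
    then obtain m where nm: "n = Suc m" using m0 by (cases n) (auto simp: P_def)
    have c: "a (m+2) / real (m+2) \<le> fnorm N x (Suc m)" using cond[of m] \<open>P \<le> n\<close> nm by simp
    have "fnorm N x (Suc n) = fnorm N x n + (1 - 1 / real (Suc n + 1)) * a (Suc n)"
      using c nm by (simp add: a_def max_def algebra_simps)
    then show ?case using step by simp
  qed
  obtain c where c: "\<forall>j\<ge>1. 0 < c j \<and> c j \<le> 1" and cP: "fnorm N x P = (\<Sum>j=1..P. c j * a j)"
    using rep[of N x P] unfolding a_def by blast
  define d where "d j = (if j \<le> P then c j else 1 - 1 / real (j+1))" for j
  have d1: "\<forall>n\<ge>1. 0 < d n \<and> d n \<le> 1"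
    using c by (auto simp: d_def divide_simps)
  have d2: "\<forall>n\<ge>P+1. d n = 1 - 1 / real (n + 1)" by (auto simp: d_def)
  define g where "g n = d (n+1) * N (n+1) (x (n+1))" for n
  have partial: "(\<Sum>i<n. g i) = fnorm N x n" if "n \<ge> P" for n
  proof -
    have "(\<Sum>i<n. g i) = (\<Sum>j=1..n. d j * a j)"
      using shift_sum[of "\<lambda>j. d j * a j" n] by (simp add: g_def a_def)
    also have "\<dots> = (\<Sum>j=1..P. d j * a j) + (\<Sum>j=P+1..P+(n-P). d j * a j)"
      using sum.ub_add_nat[of 1 P "\<lambda>j. d j * a j" "n-P"] that by simp
    also have "(\<Sum>j=1..P. d j * a j) = fnorm N x P" unfolding cP
      by (rule sum.cong) (auto simp: d_def)
    also have "(\<Sum>j=P+1..P+(n-P). d j * a j) = (\<Sum>j=Suc P..n. (1 - 1 / real (j+1)) * a j)"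
      using that by (intro sum.cong) (auto simp: d_def)
    finally show ?thesis using tail[OF that] by simp
  qed
  have gsum: "summable g"
  proof (rule summable_comparison_test[OF _ summ])
    show "\<exists>N'. \<forall>n\<ge>N'. norm (g n) \<le> N (n + 1) (x (n + 1))"
    proof (intro exI allI impI)
      fix n :: nat
      have "0 \<le> a (n+1)" using anon by simp
      moreover have "0 < d (n+1)" "d (n+1) \<le> 1" using d1 by auto
      ultimately show "norm (g n) \<le> N (n + 1) (x (n + 1))"
        by (simp add: g_def a_def[symmetric] abs_mult mult_left_le_one_le)
    qed
  qed
  have "(\<lambda>n. \<Sum>i<n. g i) \<longlonglongrightarrow> suminf g" using summable_LIMSEQ[OF gsum] .
  moreover have "eventually (\<lambda>n. (\<Sum>i<n. g i) = fnorm N x n) sequentially"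
    using partial by (auto simp: eventually_sequentially)
  ultimately have "fnorm N x \<longlonglongrightarrow> suminf g" by (rule Lim_transform_eventually) 
  then have "Xnorm N x = suminf g" unfolding Xnorm_def by (rule limI)
  then have "g sums Xnorm N x" using summable_sums[OF gsum] by simp
  moreover have "P + 1 \<ge> 2" using m0 by (simp add: P_def)
  ultimately show ?thesis using d1 d2 unfolding g_def by blast
qed

end
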